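(* Assume (A1)–(A2) below. There is a constant $\hat C_1>0$ depending only on the bounds in (A1)–(A2) such that for every $\varepsilon\in[0,\bar\varepsilon]$, $\gamma\in[\underline\gamma,\bar\gamma]$ and all $(\rho,w),(\hat\rho,\hat w)\in L^2(0,\ell)^2$ with $\underline\rho\le\rho,\hat\rho\le\bar\rho$, $-\bar w\le w,\hat w\le\bar w$ a.e., $$-\int_0^\ell\gamma\,(|w|w-|\hat w|\hat w)\,a\,(\rho w-\hat\rho\hat w)\,dx\le\hat C_1\mathcal{H}_\varepsilon(\boldsymbol u|\hat{\boldsymbol u})-2\mathcal{D}(\boldsymbol u|\hat{\boldsymbol u}),$$ where $\boldsymbol u=(\rho,w)$, $\hat{\boldsymbol u}=(\hat\rho,\hat w)$ and $\mathcal{D}(\boldsymbol u|\hat{\boldsymbol u})=\frac1{16}\int_0^\ell\gamma a\hat\rho(|w|+|\hat w|)(w-\hat w)^2\,dx$.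
   Context: Fix $\ell>0$, $a:[0,\ell]\to\mathbb{R}$, a constant $g$, $z:[0,\ell]\to\mathbb{R}$, smooth strictly convex $P:(0,\infty)\to\mathbb{R}$. (A1): positive constants $\underline\rho\le\bar\rho$, $\bar w$, $\bar\varepsilon$ with $\rho P''(\rho)\ge4\bar\varepsilon^2\bar w^2$ for $\underline\rho\le\rho\le\bar\rho$; $0<\underline a\le a\le\bar a$; $|gz|\le\bar g\bar z$. (A2): $0\le\varepsilon\le\bar\varepsilon$, $0<\underline\gamma\le\gamma\le\bar\gamma$, states satisfy $\underline\rho\le\rho\le\bar\rho$, $-\bar w\le w\le\bar w$. Relative energy: $\mathcal{H}_\varepsilon(\boldsymbol u|\hat{\boldsymbol u})=\mathcal{H}_\varepsilon(\boldsymbol u)-\mathcal{H}_\varepsilon(\hat{\boldsymbol u})-\int_0^\ell a[(\varepsilon^2\hat w^2/2+P'(\hat\rho)+gz)(\rho-\hat\rho)+\varepsilon^2\hat\rho\hat w(w-\hat w)]dx$ with $\mathcal{H}_\varepsilon(\rho,w)=\int_0^\ell a(\varepsilon^2\rho w^2/2+P(\rho)+gz\rho)dx$. *)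

theory Defs
  imports "HOL-Analysis.Analysis"
begin

definition strictly_convex_on :: "real set \<Rightarrow> (real \<Rightarrow> real) \<Rightarrow> bool" where
  "strictly_convex_on S f \<longleftrightarrow>
     (\<forall>x\<in>S. \<forall>y\<in>S. \<forall>t. x \<noteq> y \<and> 0 < t \<and> t < 1 \<longrightarrow>
        f (t * x + (1 - t) * y) < t * f x + (1 - t) * f y)"

definition smooth_pos :: "(real \<Rightarrow> real) \<Rightarrow> bool" where
  "smooth_pos P \<longleftrightarrow> (\<forall>n x. 0 < x \<longrightarrow> (deriv ^^ n) P differentiable (at x))"

definition intl :: "real \<Rightarrow> (real \<Rightarrow> real) \<Rightarrow> real" where
  "intl l f = integral\<^sup>L (lebesgue_on {0..l}) f"

definition Henergy ::
  "real \<Rightarrow> (real \<Rightarrow> real) \<Rightarrow> real \<Rightarrow> (real \<Rightarrow> real) \<Rightarrow> (real \<Rightarrow> real) \<Rightarrow> real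
     \<Rightarrow> (real \<Rightarrow> real) \<Rightarrow> (real \<Rightarrow> real) \<Rightarrow> real" where
  "Henergy l a g z P eps rho w =
     intl l (\<lambda>x. a x * (eps\<^sup>2 * rho x * (w x)\<^sup>2 / 2 + P (rho x) + g * z x * rho x))"

definition Hrel ::
  "real \<Rightarrow> (real \<Rightarrow> real) \<Rightarrow> real \<Rightarrow> (real \<Rightarrow> real) \<Rightarrow> (real \<Rightarrow> real) \<Rightarrow> real
     \<Rightarrow> (real \<Rightarrow> real) \<Rightarrow> (real \<Rightarrow> real) \<Rightarrow> (real \<Rightarrow> real) \<Rightarrow> (real \<Rightarrow> real) \<Rightarrow> real" where
  "Hrel l a g z P eps rho w rh wh =
     Henergy l a g z P eps rho w - Henergy l a g z P eps rh wh
     - intl l (\<lambda>x. a x * ((eps\<^sup>2 * (wh x)\<^sup>2 / 2 + deriv P (rh x) + g * z x) * (rho x - rh x)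
                         + eps\<^sup>2 * rh x * wh x * (w x - wh x)))"

definition Drel ::
  "real \<Rightarrow> (real \<Rightarrow> real) \<Rightarrow> real
     \<Rightarrow> (real \<Rightarrow> real) \<Rightarrow> (real \<Rightarrow> real) \<Rightarrow> (real \<Rightarrow> real) \<Rightarrow> (real \<Rightarrow> real) \<Rightarrow> real" where
  "Drel l a gam rho w rh wh =
     (1/16) * intl l (\<lambda>x. gam * a x * rh x * (\<bar>w x\<bar> + \<bar>wh x\<bar>) * (w x - wh x)\<^sup>2)"

definition L2on :: "real \<Rightarrow> (real \<Rightarrow> real) \<Rightarrow> bool" where
  "L2on l f \<longleftrightarrow> f \<in> borel_measurable (lebesgue_on {0..l})
                 \<and> integrable (lebesgue_on {0..l}) (\<lambda>x. (f x)\<^sup>2)"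

end

theory Submission
  imports Defs
begin


lemma breg:
  fixes P :: "real \<Rightarrow> real"
  assumes sm: "\<forall>n x. 0 < x \<longrightarrow> (deriv ^^ n) P differentiable (at x)"
    and lo: "0 < rlo" and E0: "0 \<le> E" and hyp: "\<forall>r. rlo \<le> r \<and> r \<le> rhi \<longrightarrow> 4 * E \<le> r * deriv (deriv P) r"
    and p: "rlo \<le> p" "p \<le> rhi" and q: "rlo \<le> q" "q \<le> rhi"
  shows "2 * E * (p - q)^2 \<le> max p q * (P p - P q - deriv P q * (p - q))"
proof (cases "p = q")
  case True then show ?thesis by simp
next
  case False
  define diff where "diff = (\<lambda>m. (deriv ^^ m) P)"
  have D: "\<forall>m t. m < 2 \<and> rlo \<le> t \<and> t \<le> rhi \<longrightarrow> DERIV (diff m) t :> diff (Suc m) t"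
  proof (intro allI impI)
    fix m t assume "m < (2::nat) \<and> rlo \<le> t \<and> t \<le> rhi"
    then have "0 < t" using lo by auto
    then have "(deriv ^^ m) P differentiable (at t)" using sm by blast
    then show "DERIV (diff m) t :> diff (Suc m) t"
      unfolding diff_def by (simp add: DERIV_deriv_iff_real_differentiable)
  qed
  obtain t where t: "(if p < q then p < t \<and> t < q else q < t \<and> t < p)"
    and eq: "P p = (\<Sum>m<2. (diff m q / fact m) * (p - q)^m) + (diff 2 t / fact 2) * (p - q)^2"
    using Taylor[of 2 diff P rlo rhi q p] D p q False by (auto simp: diff_def)
  have eq2: "P p - P q - deriv P q * (p - q) = deriv (deriv P) t / 2 * (p - q)^2"
    using eq by (simp add: diff_def numeral_2_eq_2 lessThan_Suc)
  have tr: "rlo \<le> t" "t \<le> rhi" "t \<le> max p q" "0 < t" using t p q lo by (auto split: if_splits)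
  have h: "4 * E \<le> t * deriv (deriv P) t" using hyp tr by auto
  have sq: "0 \<le> (p - q)^2" by simp
  have "2 * E * (p - q)^2 \<le> t * (deriv (deriv P) t / 2 * (p - q)^2)"
    using mult_right_mono[OF h sq] by (simp add: field_simps)
  also have "\<dots> \<le> max p q * (deriv (deriv P) t / 2 * (p - q)^2)"
  proof (rule mult_right_mono)
    show "t \<le> max p q" by fact
    have "0 \<le> t * deriv (deriv P) t" using h E0 by linarith
    then have "0 \<le> deriv (deriv P) t" using tr(4) by (simp add: zero_le_mult_iff)
    then show "0 \<le> deriv (deriv P) t / 2 * (p - q)^2" by simp
  qed
  finally show ?thesis unfolding eq2 .
qed


lemma vd_bound:
  fixes v d wb :: real
  assumes "\<bar>v + d\<bar> \<le> wb"
  shows "v * d \<le> wb^2 / 4"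
proof -
  have "4 * (v * d) \<le> (v + d)^2" using sum_squares_ge_zero[of "v-d" 0] by (simp add: power2_eq_square algebra_simps)
  also have "\<dots> \<le> wb^2" using assms by (metis abs_le_square_iff abs_of_nonneg abs_ge_zero order_trans)
  finally show ?thesis by simp
qed

lemma Qd: fixes w v :: real shows "(abs w + abs v) * (w - v)^2 / 2 \<le> (abs w * w - abs v * v) * (w - v)"
proof (cases "0 \<le> w"; cases "0 \<le> v")
  assume a: "0 \<le> w" "0 \<le> v"
  have "(abs w * w - abs v * v) * (w - v) = (w + v) * (w - v)^2" using a by (simp add: power2_eq_square algebra_simps)
  moreover have "0 \<le> (w + v) * (w - v)^2" using a by simp
  ultimately show ?thesis using a by simp
next
  assume a: "0 \<le> w" "\<not> 0 \<le> v"
  have "(abs w * w - abs v * v) * (w - v) = (w * w + v * v) * (w - v)" using a by (simp add: power2_eq_square algebra_simps)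
  moreover have "(abs w + abs v) * (w - v)^2 / 2 = (w - v) * (w - v) * (w-v) / 2" using a by (simp add: power2_eq_square)
  moreover have "(w - v) * (w - v) / 2 \<le> w * w + v * v" using sum_squares_ge_zero[of "w+v" 0] by (simp add: power2_eq_square algebra_simps)
  moreover have "0 \<le> w - v" using a by simp
  ultimately show ?thesis by (metis mult.commute mult_left_mono times_divide_eq_right)
next
  assume a: "\<not> 0 \<le> w" "0 \<le> v"
  have "(abs w * w - abs v * v) * (w - v) = (w * w + v * v) * (v - w)" using a by (simp add: power2_eq_square algebra_simps)
  moreover have "(abs w + abs v) * (w - v)^2 / 2 = (v - w) * (v - w) * (v - w) / 2" using a by (simp add: power2_eq_square algebra_simps)
  moreover have "(v - w) * (v - w) / 2 \<le> w * w + v * v" using sum_squares_ge_zero[of "w+v" 0] by (simp add: power2_eq_square algebra_simps)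
  moreover have "0 \<le> v - w" using a by simp
  ultimately show ?thesis by (metis mult.commute mult_left_mono times_divide_eq_right)
next
  assume a: "\<not> 0 \<le> w" "\<not> 0 \<le> v"
  have "(abs w * w - abs v * v) * (w - v) = (- w - v) * (w - v)^2" using a by (simp add: power2_eq_square algebra_simps)
  moreover have "0 \<le> (- w - v) * (w - v)^2" using a by simp
  ultimately show ?thesis using a by simp
qed

lemma Qabs: fixes w v :: real shows "abs (abs w * w - abs v * v) \<le> (abs w + abs v) * \<bar>w - v\<bar>"
proof (cases "0 \<le> w"; cases "0 \<le> v")
  assume a: "0 \<le> w" "0 \<le> v"
  have "abs w * w - abs v * v = (w + v) * (w - v)" using a by (simp add: algebra_simps)
  then show ?thesis using a by (simp add: abs_mult)
next
  assume a: "0 \<le> w" "\<not> 0 \<le> v"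
  have "abs (abs w * w - abs v * v) = w * w + v * v" using a by simp
  moreover have "(abs w + abs v) * \<bar>w - v\<bar> = (w - v) * (w - v)" using a by simp
  moreover have "w * w + v * v \<le> (w - v) * (w - v)" using a using mult_nonneg_nonpos[of w v] by (simp add: algebra_simps)
  ultimately show ?thesis by simp
next
  assume a: "\<not> 0 \<le> w" "0 \<le> v"
  have "abs (abs w * w - abs v * v) = w * w + v * v" using a by simp
  moreover have "(abs w + abs v) * \<bar>w - v\<bar> = (v - w) * (v - w)" using a by simp
  moreover have "w * w + v * v \<le> (v - w) * (v - w)" using a using mult_nonneg_nonpos[of v w] by (simp add: algebra_simps)
  ultimately show ?thesis by simp
next
  assume a: "\<not> 0 \<le> w" "\<not> 0 \<le> v"
  have "abs w * w - abs v * v = (- w - v) * (w - v)" using a by (simp add: algebra_simps)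
  then have "abs (abs w * w - abs v * v) = abs (- w - v) * abs (w - v)" by (simp only: abs_mult)
  moreover have "abs (- w - v) = abs w + abs v" using a by simp
  ultimately show ?thesis by simp
qed

lemma quadmax: fixes p x y c :: real assumes "0 < p" shows "- (3/8) * p * x^2 + c * x * y \<le> (2/3) * c^2 * y^2 / p"
proof -
  have "0 \<le> (3/8) * (p * x - (4/3) * c * y)^2" by simp
  then have "p * (- (3/8) * p * x^2 + c * x * y) \<le> (2/3) * c^2 * y^2"
    by (simp add: power2_eq_square algebra_simps)
  then show ?thesis using assms by (simp add: field_simps)
qed

lemma L2:
  fixes p q w v wb rlo :: real
  assumes "0 < rlo" "rlo \<le> p" "\<bar>w\<bar> \<le> wb" "\<bar>v\<bar> \<le> wb"
  shows "- ((abs w * w - abs v * v) * (p * w - q * v)) + q * (abs w + abs v) * (w - v)^2 / 8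
         \<le> (25/12) * wb^3 * (p - q)^2 / rlo"
proof -
  define Q where "Q = abs w * w - abs v * v"
  define S where "S = abs w + abs v"
  define d where "d = w - v"
  define r where "r = p - q"
  have p0: "0 < p" using assms by linarith
  have S0: "0 \<le> S" "S \<le> 2 * wb" using assms by (auto simp: S_def)
  have dwb: "\<bar>d\<bar> \<le> 2 * wb" using assms by (auto simp: d_def)
  have wb0: "0 \<le> wb" using assms by linarith
  have e1: "- (Q * (p * w - q * v)) + q * S * d^2 / 8 = - p * (Q * d) - Q * r * v + (p - r) * S * d^2 / 8"
    by (simp add: Q_def S_def d_def r_def algebra_simps power2_eq_square)
  have i1: "- p * (Q * d) \<le> - p * (S * d^2 / 2)"
  proof -
    have "S * d^2 / 2 \<le> Q * d" using Qd[of w v] by (simp add: Q_def S_def d_def)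
    then have "p * (S * d^2 / 2) \<le> p * (Q * d)" using p0 by (intro mult_left_mono) auto
    then show ?thesis by simp
  qed
  have i2: "- Q * r * v \<le> S * \<bar>d\<bar> * \<bar>r\<bar> * wb"
  proof -
    have "- Q * r * v \<le> \<bar>Q\<bar> * \<bar>r\<bar> * \<bar>v\<bar>" by (simp add: abs_mult[symmetric] abs_le_iff)
    also have "\<dots> \<le> (S * \<bar>d\<bar>) * \<bar>r\<bar> * wb"
      using Qabs[of w v] assms(4) S0 by (intro mult_mono) (auto simp: Q_def S_def d_def)
    finally show ?thesis by simp
  qed
  have i3: "- r * S * d^2 / 8 \<le> S * \<bar>d\<bar> * \<bar>r\<bar> * wb / 4"
  proof -
    have "- r * S * d^2 / 8 \<le> \<bar>r\<bar> * S * (\<bar>d\<bar> * \<bar>d\<bar>) / 8"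
    proof -
      have "- r \<le> \<bar>r\<bar>" by simp
      then have "- r * (S * (d * d)) \<le> \<bar>r\<bar> * (S * (d * d))" using S0 by (intro mult_right_mono) auto
      then show ?thesis by (simp add: power2_eq_square abs_mult_self_eq mult.assoc)
    qed
    also have "\<dots> \<le> \<bar>r\<bar> * S * (\<bar>d\<bar> * (2 * wb)) / 8"
      using S0 dwb by (intro divide_right_mono mult_left_mono) auto
    finally show ?thesis by (simp add: algebra_simps)
  qed
  have "- (Q * (p * w - q * v)) + q * S * d^2 / 8 \<le> S * (- (3/8) * p * \<bar>d\<bar>^2 + (5/4 * wb) * \<bar>d\<bar> * \<bar>r\<bar>)"
    using e1 i1 i2 i3 by (simp add: algebra_simps power2_eq_square)
  also have "\<dots> \<le> S * ((2/3) * (5/4 * wb)^2 * \<bar>r\<bar>^2 / p)"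
    using quadmax[OF p0, of "\<bar>d\<bar>" "5/4 * wb" "\<bar>r\<bar>"] S0 by (intro mult_left_mono) auto
  also have "\<dots> \<le> (2 * wb) * ((2/3) * (5/4 * wb)^2 * \<bar>r\<bar>^2 / rlo)"
    using S0 assms p0 by (intro mult_mono divide_left_mono) auto
  also have "\<dots> = (25/12) * wb^3 * (p - q)^2 / rlo"
    by (simp add: r_def power2_eq_square power3_eq_cube)
  finally show ?thesis by (simp add: Q_def S_def d_def)
qed

lemma L1:
  fixes p q w v wb rlo rhi e epsb Br E :: real
  assumes "0 < rlo" "rlo \<le> p" "p \<le> rhi" "rlo \<le> q" "q \<le> rhi" "\<bar>w\<bar> \<le> wb" "\<bar>v\<bar> \<le> wb"
    "0 \<le> e" "e \<le> epsb" "E = epsb^2 * wb^2" and Br: "2 * E * (p - q)^2 \<le> max p q * Br"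
  shows "E * (p - q)^2 / rhi \<le> e^2/2 * (p * w^2 - p * v^2 - 2 * q * v * w + 2 * q * v^2) + Br"
proof -
  define d where "d = w - v"
  define r where "r = p - q"
  define K where "K = e^2/2 * (p * w^2 - p * v^2 - 2 * q * v * w + 2 * q * v^2)"
  have p0: "0 < p" "0 < q" using assms by linarith+
  have E0: "0 \<le> E" using assms by simp
  have ee: "e^2 \<le> epsb^2" using assms by (intro power_mono) auto
  have vv: "v^2 \<le> wb^2" using assms by (metis abs_le_square_iff abs_of_nonneg abs_ge_zero order_trans)
  have ev: "e^2 * v^2 \<le> E" using ee vv assms(10) by (simp add: mult_mono)
  have Kid: "K = e^2 * (p/2 * d^2 + r * v * d)"
    by (simp add: K_def d_def r_def algebra_simps power2_eq_square)
  have K1: "- E * r^2 / (2 * p) \<le> K"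
  proof -
    have "p/2 * d^2 + r * v * d = (p * d + r * v)^2 / (2 * p) - r^2 * v^2 / (2 * p)"
      using p0 by (simp add: field_simps power2_eq_square)
    then have "K = e^2 * ((p * d + r * v)^2 / (2 * p) - r^2 * v^2 / (2 * p))"
      using Kid by simp
    then have "K = e^2 * ((p * d + r * v)^2 / (2 * p)) - (e^2 * v^2) * r^2 / (2 * p)"
      by (simp add: right_diff_distrib mult.commute mult.left_commute)
    moreover have "0 \<le> e^2 * ((p * d + r * v)^2 / (2 * p))" using p0 by simp
    moreover have "(e^2 * v^2) * r^2 / (2 * p) \<le> E * r^2 / (2 * p)"
      using ev p0 by (intro divide_right_mono mult_right_mono) auto
    ultimately show ?thesis by simp
  qed
  have K2: "- E * (q - p) / 4 \<le> K" if qp: "p < q"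
  proof -
    have vd: "v * d \<le> wb^2 / 4" using vd_bound[of v d wb] assms(6) by (simp add: d_def)
    have "r * (wb^2/4) \<le> r * (v * d)" using vd qp by (intro mult_left_mono_neg) (auto simp: r_def)
    then have "e^2 * (r * (wb^2/4)) \<le> e^2 * (r * (v * d))" by (rule mult_left_mono) simp
    moreover have "- E * (q - p) / 4 \<le> e^2 * (r * (wb^2/4))"
    proof -
      have "e^2 * wb^2 \<le> E" using ee assms(10) by (simp add: mult_right_mono)
      then have "(e^2 * wb^2) * (q - p) \<le> E * (q - p)" using qp by (intro mult_right_mono) auto
      moreover have "e^2 * (r * (wb^2/4)) = - ((e^2 * wb^2) * (q - p)) / 4" by (simp add: r_def algebra_simps)
      ultimately show ?thesis by (simp add: divide_right_mono)
    qed
    moreover have "0 \<le> e^2 * (p/2 * d^2)" using p0 by simp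
    ultimately show ?thesis using Kid by (simp add: algebra_simps)
  qed
  show ?thesis
  proof (cases "q \<le> p")
    case True
    then have m: "max p q = p" by simp
    have B: "2 * E * r^2 / p \<le> Br" using Br m p0 by (simp add: r_def field_simps)
    have "E * r^2 / rhi \<le> E * r^2 / p" using p0 assms E0 by (intro divide_left_mono) auto
    also have "\<dots> \<le> 2 * E * r^2 / p - E * r^2 / (2 * p)" using p0 E0 by (simp add: field_simps)
    also have "\<dots> \<le> Br + K" using B K1 by simp
    finally show ?thesis by (simp add: r_def K_def)
  next
    case False
    then have m: "max p q = q" and qp: "p < q" by auto
    have B: "2 * E * r^2 / q \<le> Br" using Br m p0 by (simp add: r_def field_simps)
    have "E * r^2 / rhi \<le> E * r^2 / q" using p0 assms E0 by (intro divide_left_mono) auto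
    also have "\<dots> \<le> Br + K"
    proof (cases "q / 4 \<le> q - p")
      case True
      have "E * r^2 / q \<le> 2 * E * r^2 / q - E * (q - p) / 4"
      proof -
        have "E * (q - p) * q \<le> E * (q - p) * (4 * (q - p))" using True E0 qp
          by (intro mult_left_mono) auto
        then have a1: "E * (q - p) * q / (4 * q) \<le> E * (q - p) * (4 * (q - p)) / (4 * q)"
          using p0 by (intro divide_right_mono) auto
        have a2: "E * (q - p) * q / (4 * q) = E * (q - p) / 4" using p0 by simp
        have a3: "E * (q - p) * (4 * (q - p)) / (4 * q) = E * r^2 / q"
          using p0 by (simp add: r_def power2_eq_square field_simps)
        have a4: "2 * E * r^2 / q = 2 * (E * r^2 / q)" by simp
        show ?thesis using a1 a2 a3 a4 by linarith
      qed
      then show ?thesis using B K2[OF qp] by simp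
    next
      case False
      have "E * r^2 / q \<le> 2 * E * r^2 / q - E * r^2 / (2 * p)"
      proof -
        have "E * r^2 * q \<le> E * r^2 * (2 * p)" using False E0 p0
          by (intro mult_left_mono) auto
        then show ?thesis using p0 by (simp add: field_simps)
      qed
      then show ?thesis using B K1 by simp
    qed
    finally show ?thesis by (simp add: r_def K_def)
  qed
qed


lemma PW:
  fixes p q w v av gm e gz Pp Pq Dq rlo rhi wb epsb ghi :: real
  assumes "0 < rlo" "rlo \<le> p" "p \<le> rhi" "rlo \<le> q" "q \<le> rhi" "\<bar>w\<bar> \<le> wb" "\<bar>v\<bar> \<le> wb"
    "0 < wb" "0 < epsb" "0 \<le> e" "e \<le> epsb" "0 \<le> gm" "gm \<le> ghi" "0 \<le> av"
    and Br: "2 * (epsb^2 * wb^2) * (p - q)^2 \<le> max p q * (Pp - Pq - Dq * (p - q))"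
  shows "- (gm * (\<bar>w\<bar> * w - \<bar>v\<bar> * v) * av * (p * w - q * v))
     \<le> (3 * ghi * wb * rhi / (rlo * epsb^2)) *
          (av * (e^2 * p * w^2 / 2 + Pp + gz * p) - av * (e^2 * q * v^2 / 2 + Pq + gz * q)
           - av * ((e^2 * v^2 / 2 + Dq + gz) * (p - q) + e^2 * q * v * (w - v)))
       - 2 * (1/16) * (gm * av * q * (\<bar>w\<bar> + \<bar>v\<bar>) * (w - v)^2)"
proof -
  define E where "E = epsb^2 * wb^2"
  define C1 where "C1 = 3 * ghi * wb * rhi / (rlo * epsb^2)"
  define Br0 where "Br0 = Pp - Pq - Dq * (p - q)"
  define K where "K = e^2/2 * (p * w^2 - p * v^2 - 2 * q * v * w + 2 * q * v^2)"
  have rhi0: "0 < rhi" using assms by linarith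
  have ghi0: "0 \<le> ghi" using assms by linarith
  have hL1: "E * (p - q)^2 / rhi \<le> K + Br0"
    using L1[of rlo p rhi q w wb v e epsb E Br0] assms Br by (simp add: E_def Br0_def K_def)
  have hH: "av * (e^2 * p * w^2 / 2 + Pp + gz * p) - av * (e^2 * q * v^2 / 2 + Pq + gz * q)
           - av * ((e^2 * v^2 / 2 + Dq + gz) * (p - q) + e^2 * q * v * (w - v)) = av * (K + Br0)"
    by (simp add: K_def Br0_def field_simps power2_eq_square)
  have hL2: "- ((\<bar>w\<bar> * w - \<bar>v\<bar> * v) * (p * w - q * v)) + q * (\<bar>w\<bar> + \<bar>v\<bar>) * (w - v)^2 / 8
         \<le> (25/12) * wb^3 * (p - q)^2 / rlo"
    using L2[of rlo p w wb v q] assms by simp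
  have idl: "- (gm * (\<bar>w\<bar> * w - \<bar>v\<bar> * v) * av * (p * w - q * v)) + 2 * (1/16) * (gm * av * q * (\<bar>w\<bar> + \<bar>v\<bar>) * (w - v)^2)
     = (gm * av) * (- ((\<bar>w\<bar> * w - \<bar>v\<bar> * v) * (p * w - q * v)) + q * (\<bar>w\<bar> + \<bar>v\<bar>) * (w - v)^2 / 8)"
    by (simp add: algebra_simps)
  have "(gm * av) * (- ((\<bar>w\<bar> * w - \<bar>v\<bar> * v) * (p * w - q * v)) + q * (\<bar>w\<bar> + \<bar>v\<bar>) * (w - v)^2 / 8)
        \<le> (gm * av) * ((25/12) * wb^3 * (p - q)^2 / rlo)"
    using hL2 assms by (intro mult_left_mono) auto
  also have "\<dots> \<le> (ghi * av) * (3 * wb^3 * (p - q)^2 / rlo)"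
    using assms by (intro mult_mono divide_right_mono) auto
  also have "(ghi * av) * (3 * wb^3 * (p - q)^2 / rlo) = C1 * av * (E * (p - q)^2 / rhi)"
    using assms rhi0 by (simp add: C1_def E_def field_simps power2_eq_square power3_eq_cube)
  also have "\<dots> \<le> C1 * av * (K + Br0)"
    using hL1 assms rhi0 ghi0 by (intro mult_left_mono) (auto simp: C1_def)
  finally have fin: "- (gm * (\<bar>w\<bar> * w - \<bar>v\<bar> * v) * av * (p * w - q * v)) + 2 * (1/16) * (gm * av * q * (\<bar>w\<bar> + \<bar>v\<bar>) * (w - v)^2)
      \<le> C1 * (av * (K + Br0))" using idl by (simp add: mult.assoc)
  show ?thesis unfolding C1_def[symmetric] hH using fin by linarith
qed


lemma meas_AE_on:
  fixes f g :: "real \<Rightarrow> real"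
  assumes S: "S \<in> sets lebesgue" and f: "f \<in> borel_measurable (lebesgue_on S)"
    and ae: "AE x in lebesgue_on S. f x = g x"
  shows "g \<in> borel_measurable (lebesgue_on S)"
proof -
  have S': "S \<inter> space lebesgue \<in> sets lebesgue" using S by simp
  have f': "(\<lambda>x. indicator S x *\<^sub>R f x) \<in> borel_measurable lebesgue"
    using f borel_measurable_restrict_space_iff[OF S'] by blast
  have "AE x in lebesgue. x \<in> S \<longrightarrow> f x = g x" using ae AE_restrict_space_iff[OF S'] by simp
  then have "AE x in lebesgue. indicator S x *\<^sub>R f x = indicator S x *\<^sub>R g x"
    by eventually_elim (auto simp: indicator_def)
  then have "(\<lambda>x. indicator S x *\<^sub>R g x) \<in> borel_measurable lebesgue"
    by (rule borel_measurable_AE[OF f'])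
  then show ?thesis using borel_measurable_restrict_space_iff[OF S'] by blast
qed

lemma cont_bound:
  fixes f :: "real \<Rightarrow> real"
  assumes "continuous_on {lo..hi} f"
  shows "\<exists>B. \<forall>t\<in>{lo..hi}. \<bar>f t\<bar> \<le> B"
proof -
  have "bounded (f ` {lo..hi})" using compact_imp_bounded[OF compact_continuous_image[OF assms compact_Icc]] .
  then show ?thesis unfolding bounded_real by auto
qed

lemma bnd_mult: "\<bar>x\<bar> \<le> X \<Longrightarrow> \<bar>y\<bar> \<le> Y \<Longrightarrow> \<bar>(x::real) * y\<bar> \<le> X * Y"
  by (simp add: abs_mult mult_mono')
lemma bnd_add: "\<bar>x\<bar> \<le> X \<Longrightarrow> \<bar>y\<bar> \<le> Y \<Longrightarrow> \<bar>(x::real) + y\<bar> \<le> X + Y"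
  by (simp add: abs_triangle_ineq order_trans[OF abs_triangle_ineq])
lemma bnd_diff: "\<bar>x\<bar> \<le> X \<Longrightarrow> \<bar>y\<bar> \<le> Y \<Longrightarrow> \<bar>(x::real) - y\<bar> \<le> X + Y"
  by (simp add: order_trans[OF abs_triangle_ineq4])
lemma bnd_pow: "\<bar>x\<bar> \<le> X \<Longrightarrow> \<bar>(x::real) ^ n\<bar> \<le> X ^ n"
  by (metis abs_ge_zero power_abs power_mono)
lemma bnd_div: "\<bar>x\<bar> \<le> X \<Longrightarrow> \<bar>(x::real) / c\<bar> \<le> X / \<bar>c\<bar>"
  by (simp add: divide_right_mono)
lemma bnd_abs: "\<bar>x\<bar> \<le> X \<Longrightarrow> \<bar>\<bar>(x::real)\<bar>\<bar> \<le> X"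
  by simp
lemma bnd_refl: "\<bar>(x::real)\<bar> \<le> \<bar>x\<bar>" by simp



theorem lemma4p2:
  fixes rho_lo rho_hi wb epsb a_lo a_hi gb zb gam_lo gam_hi :: real
  assumes "0 < rho_lo" "rho_lo \<le> rho_hi" "0 < wb" "0 < epsb"
    and "0 < a_lo" "a_lo \<le> a_hi" "0 < gb" "0 < zb"
    and "0 < gam_lo" "gam_lo \<le> gam_hi"
  shows "\<exists>C1>0. \<forall>(l::real) (a::real\<Rightarrow>real) (g::real) (z::real\<Rightarrow>real) (P::real\<Rightarrow>real).
     0 < l
     \<and> smooth_pos P \<and> strictly_convex_on {0<..} P
     \<and> (\<forall>r. rho_lo \<le> r \<and> r \<le> rho_hi \<longrightarrow> 4 * epsb\<^sup>2 * wb\<^sup>2 \<le> r * deriv (deriv P) r)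
     \<and> a \<in> borel_measurable (lebesgue_on {0..l}) \<and> z \<in> borel_measurable (lebesgue_on {0..l})
     \<and> (\<forall>x\<in>{0..l}. a_lo \<le> a x \<and> a x \<le> a_hi)
     \<and> (\<forall>x\<in>{0..l}. \<bar>g * z x\<bar> \<le> gb * zb)
     \<longrightarrow> (\<forall>eps gam rho w rh wh.
           0 \<le> eps \<and> eps \<le> epsb \<and> gam_lo \<le> gam \<and> gam \<le> gam_hi
           \<and> L2on l rho \<and> L2on l w \<and> L2on l rh \<and> L2on l wh
           \<and> (AE x in lebesgue_on {0..l}. rho_lo \<le> rho x \<and> rho x \<le> rho_hi
                 \<and> rho_lo \<le> rh x \<and> rh x \<le> rho_hi
                 \<and> - wb \<le> w x \<and> w x \<le> wb \<and> - wb \<le> wh x \<and> wh x \<le> wb)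
           \<longrightarrow> - intl l (\<lambda>x. gam * (\<bar>w x\<bar> * w x - \<bar>wh x\<bar> * wh x) * a x
                              * (rho x * w x - rh x * wh x))
               \<le> C1 * Hrel l a g z P eps rho w rh wh - 2 * Drel l a gam rho w rh wh)"
  proof -
  define C1 where "C1 = 3 * gam_hi * wb * rho_hi / (rho_lo * epsb^2)"
  have C1pos: "0 < C1" using assms by (simp add: C1_def)
  show ?thesis
    apply (rule exI[of _ C1])
    apply (rule conjI[OF C1pos])
    apply (intro allI impI)
    apply (elim conjE)
    subgoal premises prems for l a g z P eps gam rho w rh wh
    proof -
      define M where "M = lebesgue_on {0..l}"
      have l0: "0 < l" using prems by blast
      have sm: "\<forall>n x. 0 < x \<longrightarrow> (deriv ^^ n) P differentiable (at x)"
        using prems smooth_pos_def by blast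
      have hypP: "\<forall>r. rho_lo \<le> r \<and> r \<le> rho_hi \<longrightarrow> 4 * (epsb^2 * wb^2) \<le> r * deriv (deriv P) r"
        using prems by (simp add: mult.assoc)
      have ameas: "a \<in> borel_measurable M" and zmeas: "z \<in> borel_measurable M"
        using prems by (auto simp: M_def)
      have abnd: "\<forall>x\<in>{0..l}. a_lo \<le> a x \<and> a x \<le> a_hi" using prems by blast
      have gzbnd: "\<forall>x\<in>{0..l}. \<bar>g * z x\<bar> \<le> gb * zb" using prems by blast
      have epsr: "0 \<le> eps" "eps \<le> epsb" using prems by blast+
      have gamr: "gam_lo \<le> gam" "gam \<le> gam_hi" using prems by blast+
      have rmeas: "rho \<in> borel_measurable M" "w \<in> borel_measurable M" "rh \<in> borel_measurable M" "wh \<in> borel_measurable M"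
        using prems by (auto simp: L2on_def M_def)
      have AEB: "AE x in M. rho_lo \<le> rho x \<and> rho x \<le> rho_hi \<and> rho_lo \<le> rh x \<and> rh x \<le> rho_hi
                 \<and> - wb \<le> w x \<and> w x \<le> wb \<and> - wb \<le> wh x \<and> wh x \<le> wb"
        using prems unfolding M_def by blast
      have Sl: "{0..l} \<in> sets lebesgue" by simp
      have finM: "finite_measure M" unfolding M_def by (rule finite_measure_lebesgue_on) simp
      have contP: "continuous_on {0<..} P"
      proof (rule continuous_at_imp_continuous_on, intro ballI)
        fix x :: real assume "x \<in> {0<..}"
        then have "(deriv ^^ 0) P differentiable (at x)" using sm by (metis greaterThan_iff)
        then show "isCont P x" by (simp add: differentiable_imp_continuous_within)
      qed
      have contD: "continuous_on {0<..} (deriv P)"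
      proof (rule continuous_at_imp_continuous_on, intro ballI)
        fix x :: real assume "x \<in> {0<..}"
        then have "(deriv ^^ 1) P differentiable (at x)" using sm by (metis greaterThan_iff)
        then show "isCont (deriv P) x" by (simp add: differentiable_imp_continuous_within)
      qed
      define cl where "cl = (\<lambda>t::real. max rho_lo (min rho_hi t))"
      have clc: "continuous_on UNIV cl" unfolding cl_def by (intro continuous_intros)
      have clr: "cl ` UNIV \<subseteq> {0<..}" using assms by (auto simp: cl_def)
      have Pc: "continuous_on UNIV (\<lambda>t. P (cl t))" by (rule continuous_on_compose2[OF contP clc clr])
      have Dc: "continuous_on UNIV (\<lambda>t. deriv P (cl t))" by (rule continuous_on_compose2[OF contD clc clr])
      have mP1: "(\<lambda>x. P (rho x)) \<in> borel_measurable M"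
      proof -
        have "(\<lambda>x. P (cl (rho x))) \<in> borel_measurable M" by (rule borel_measurable_continuous_on[OF Pc rmeas(1)])
        moreover have "AE x in M. P (cl (rho x)) = P (rho x)"
          using AEB by eventually_elim (auto simp: cl_def)
        ultimately show ?thesis unfolding M_def by (rule meas_AE_on[OF Sl])
      qed
      have mP2: "(\<lambda>x. P (rh x)) \<in> borel_measurable M"
      proof -
        have "(\<lambda>x. P (cl (rh x))) \<in> borel_measurable M" by (rule borel_measurable_continuous_on[OF Pc rmeas(3)])
        moreover have "AE x in M. P (cl (rh x)) = P (rh x)"
          using AEB by eventually_elim (auto simp: cl_def)
        ultimately show ?thesis unfolding M_def by (rule meas_AE_on[OF Sl])
      qed
      have mD2: "(\<lambda>x. deriv P (rh x)) \<in> borel_measurable M"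
      proof -
        have "(\<lambda>x. deriv P (cl (rh x))) \<in> borel_measurable M" by (rule borel_measurable_continuous_on[OF Dc rmeas(3)])
        moreover have "AE x in M. deriv P (cl (rh x)) = deriv P (rh x)"
          using AEB by eventually_elim (auto simp: cl_def)
        ultimately show ?thesis unfolding M_def by (rule meas_AE_on[OF Sl])
      qed
      have sub: "{rho_lo..rho_hi} \<subseteq> {0<..}" using assms by auto
      obtain MP where MP: "\<forall>t\<in>{rho_lo..rho_hi}. \<bar>P t\<bar> \<le> MP"
        using cont_bound[OF continuous_on_subset[OF contP sub]] by blast
      obtain MD where MD: "\<forall>t\<in>{rho_lo..rho_hi}. \<bar>deriv P t\<bar> \<le> MD"
        using cont_bound[OF continuous_on_subset[OF contD sub]] by blast
      have HB: "AE x in M. \<bar>rho x\<bar> \<le> rho_hi \<and> \<bar>rh x\<bar> \<le> rho_hi \<and> \<bar>w x\<bar> \<le> wb \<and> \<bar>wh x\<bar> \<le> wb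
          \<and> \<bar>a x\<bar> \<le> a_hi \<and> \<bar>g * z x\<bar> \<le> gb * zb \<and> \<bar>P (rho x)\<bar> \<le> MP \<and> \<bar>P (rh x)\<bar> \<le> MP
          \<and> \<bar>deriv P (rh x)\<bar> \<le> MD"
        using AEB AE_space[of M]
      proof eventually_elim
        case (elim x)
        then have x: "x \<in> {0..l}" by (simp add: M_def)
        have ax: "a_lo \<le> a x" "a x \<le> a_hi" using abnd x by auto
        have gx: "\<bar>g * z x\<bar> \<le> gb * zb" using gzbnd x by auto
        have r1: "rho x \<in> {rho_lo..rho_hi}" "rh x \<in> {rho_lo..rho_hi}" using elim by auto
        have p1: "\<bar>P (rho x)\<bar> \<le> MP" "\<bar>P (rh x)\<bar> \<le> MP" "\<bar>deriv P (rh x)\<bar> \<le> MD"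
          using MP MD r1 by auto
        have "0 \<le> a x" using ax assms by linarith
        then have "\<bar>a x\<bar> \<le> a_hi" using ax by simp
        moreover have "\<bar>rho x\<bar> \<le> rho_hi" "\<bar>rh x\<bar> \<le> rho_hi" using elim assms by auto
        moreover have "\<bar>w x\<bar> \<le> wb" "\<bar>wh x\<bar> \<le> wb" using elim by auto
        ultimately show ?case using gx p1 by blast
      qed
      note [measurable] = ameas zmeas rmeas mP1 mP2 mD2
      have intg: "integrable M (f :: real \<Rightarrow> real)" if fm: "f \<in> borel_measurable M" and fb: "\<exists>B. AE x in M. \<bar>f x\<bar> \<le> B" for f
      proof -
        obtain B where "AE x in M. \<bar>f x\<bar> \<le> B" using fb by blast
        then show ?thesis using finite_measure.integrable_const_bound[OF finM, of f B] fm by simp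
      qed
      define IA where "IA = (\<lambda>x. a x * (eps\<^sup>2 * rho x * (w x)\<^sup>2 / 2 + P (rho x) + g * z x * rho x))"
      define IB where "IB = (\<lambda>x. a x * (eps\<^sup>2 * rh x * (wh x)\<^sup>2 / 2 + P (rh x) + g * z x * rh x))"
      define IC where "IC = (\<lambda>x. a x * ((eps\<^sup>2 * (wh x)\<^sup>2 / 2 + deriv P (rh x) + g * z x) * (rho x - rh x)
                         + eps\<^sup>2 * rh x * wh x * (w x - wh x)))"
      define ID where "ID = (\<lambda>x. gam * a x * rh x * (\<bar>w x\<bar> + \<bar>wh x\<bar>) * (w x - wh x)\<^sup>2)"
      define IL where "IL = (\<lambda>x. gam * (\<bar>w x\<bar> * w x - \<bar>wh x\<bar> * wh x) * a x * (rho x * w x - rh x * wh x))"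
      have iA: "integrable M IA"
        apply (rule intg)
        subgoal unfolding IA_def by measurable
        apply (rule exI)
        apply (rule eventually_mono[OF HB])
        apply (elim conjE)
        unfolding IA_def
        apply ((assumption | rule bnd_mult bnd_add bnd_diff bnd_pow bnd_div bnd_abs bnd_refl)+)
        done
      have iB: "integrable M IB"
        apply (rule intg)
        subgoal unfolding IB_def by measurable
        apply (rule exI)
        apply (rule eventually_mono[OF HB])
        apply (elim conjE)
        unfolding IB_def
        apply ((assumption | rule bnd_mult bnd_add bnd_diff bnd_pow bnd_div bnd_abs bnd_refl)+)
        done
      have iC: "integrable M IC"
        apply (rule intg)
        subgoal unfolding IC_def by measurable
        apply (rule exI)
        apply (rule eventually_mono[OF HB])
        apply (elim conjE)
        unfolding IC_def
        apply ((assumption | rule bnd_mult bnd_add bnd_diff bnd_pow bnd_div bnd_abs bnd_refl)+)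
        done
      have iD: "integrable M ID"
        apply (rule intg)
        subgoal unfolding ID_def by measurable
        apply (rule exI)
        apply (rule eventually_mono[OF HB])
        apply (elim conjE)
        unfolding ID_def
        apply ((assumption | rule bnd_mult bnd_add bnd_diff bnd_pow bnd_div bnd_abs bnd_refl)+)
        done
      have iL: "integrable M IL"
        apply (rule intg)
        subgoal unfolding IL_def by measurable
        apply (rule exI)
        apply (rule eventually_mono[OF HB])
        apply (elim conjE)
        unfolding IL_def
        apply ((assumption | rule bnd_mult bnd_add bnd_diff bnd_pow bnd_div bnd_abs bnd_refl)+)
        done
      have pw: "AE x in M. - IL x \<le> C1 * (IA x - IB x - IC x) - 2 * (1/16 * ID x)"
        using AEB AE_space[of M]
      proof eventually_elim
        case (elim x)
        have br: "2 * (epsb^2 * wb^2) * (rho x - rh x)^2 \<le> max (rho x) (rh x) * (P (rho x) - P (rh x) - deriv P (rh x) * (rho x - rh x))"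
          using breg[OF sm _ _ hypP, of "rho x" "rh x"] elim assms by simp
        have "- (gam * (\<bar>w x\<bar> * w x - \<bar>wh x\<bar> * wh x) * a x * (rho x * w x - rh x * wh x))
     \<le> (3 * gam_hi * wb * rho_hi / (rho_lo * epsb^2)) *
          (a x * (eps^2 * rho x * (w x)^2 / 2 + P (rho x) + (g * z x) * rho x) - a x * (eps^2 * rh x * (wh x)^2 / 2 + P (rh x) + (g * z x) * rh x)
           - a x * ((eps^2 * (wh x)^2 / 2 + deriv P (rh x) + (g * z x)) * (rho x - rh x) + eps^2 * rh x * wh x * (w x - wh x)))
       - 2 * (1/16) * (gam * a x * rh x * (\<bar>w x\<bar> + \<bar>wh x\<bar>) * (w x - wh x)^2)"
        proof (rule PW)
          have "x \<in> {0..l}" using elim by (simp add: M_def)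
          then have "a_lo \<le> a x" using abnd by blast
          then show "0 \<le> a x" using assms by linarith
        qed (use elim(1) assms epsr gamr br in auto)
        then show ?case by (simp add: IA_def IB_def IC_def ID_def IL_def C1_def)
      qed
      have "integral\<^sup>L M (\<lambda>x. - IL x) \<le> integral\<^sup>L M (\<lambda>x. C1 * (IA x - IB x - IC x) - 2 * (1/16 * ID x))"
        by (rule integral_mono_AE[OF _ _ pw]) (use iA iB iC iD iL in auto)
      then show ?thesis
        using iA iB iC iD iL
        by (simp add: intl_def Hrel_def Henergy_def Drel_def M_def[symmetric] IA_def[symmetric] IB_def[symmetric]
             IC_def[symmetric] ID_def[symmetric] IL_def[symmetric] C1_def[symmetric])
    qed
    done
qed

end
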